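(* Let $\mathbf{u}_j\in c_0$, $j\in\mathbb{N}_m$, be linearly independent, $\mathbf{y}\in\mathbb{R}^m$, $\mathcal{L}(\mathbf{x}):=[\langle\mathbf{u}_j,\mathbf{x}\rangle:j\in\mathbb{N}_m]$ for $\mathbf{x}\in\ell_1(\mathbb{N})$, and $\mathcal{L}^*(\mathbf{c}):=\sum_{j\in\mathbb{N}_m}c_j\mathbf{u}_j$ for $\mathbf{c}\in\mathbb{R}^m$. Then $\hat{\mathbf{x}}\in\ell_1(\mathbb{N})$ is a solution of $\inf\{\|\mathbf{x}\|_1+\iota_{\mathbf{y}}(\mathcal{L}(\mathbf{x})):\mathbf{x}\in\ell_1(\mathbb{N})\}$ (equivalently, of $\inf\{\|\mathbf{x}\|_1:\mathbf{x}\in\ell_1(\mathbb{N}),\ \mathcal{L}(\mathbf{x})=\mathbf{y}\}$) if and only if there exists $\mathbf{c}\in\mathbb{R}^m$ such that $$\mathbf{c}=\mathrm{prox}_{\iota_{\mathbf{y}}^*}(\mathbf{c}+\mathcal{L}(\hat{\mathbf{x}}))\quad\text{and}\quad \hat{\mathbf{x}}=\mathrm{prox}_{\|\cdot\|_1,\ell_2(\mathbb{N}),\mathcal{T}_0}\big(\hat{\mathbf{x}}-\mathcal{S}\mathcal{L}^*(\mathbf{c})\big).$$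
   Context: $\ell_1(\mathbb{N})$, $\ell_2(\mathbb{N})$ are the usual sequence spaces; $c_0$ is the space of real sequences tending to $0$ with $\|\mathbf{u}\|_\infty=\sup_j|u_j|$; $\langle\mathbf{u},\mathbf{x}\rangle:=\sum_ju_jx_j$; $\mathbb{N}_m:=\{1,\dots,m\}$. $\iota_{\mathbf{y}}:\mathbb{R}^m\to\mathbb{R}\cup\{+\infty\}$ is $0$ at $\mathbf{y}$ and $+\infty$ elsewhere; its convex conjugate is $\iota_{\mathbf{y}}^*(\mathbf{c})=\langle\mathbf{y},\mathbf{c}\rangle_{\mathbb{R}^m}$. For a convex $\psi:\mathbb{R}^m\to\mathbb{R}\cup\{+\infty\}$, $\mathrm{prox}_\psi(\mathbf{a}):=\arg\min\{\frac12\|\mathbf{a}-\mathbf{c}\|_{\mathbb{R}^m}^2+\psi(\mathbf{c}):\mathbf{c}\in\mathbb{R}^m\}$ (so $\mathrm{prox}_{\iota_{\mathbf{y}}^*}(\mathbf{a})=\mathbf{a}-\mathbf{y}$). $\mathcal{T}_0:\ell_1(\mathbb{N})\to\ell_2(\mathbb{N})$ is the inclusion map, and $\mathrm{prox}_{\|\cdot\|_1,\ell_2(\mathbb{N}),\mathcal{T}_0}(\mathbf{x}):=\arg\min\{\frac12\|\mathbf{x}-\mathbf{z}\|_2^2+\|\mathbf{z}\|_1:\mathbf{z}\in\ell_1(\mathbb{N})\}=(\max\{|x_j|-1,0\}\,\mathrm{sign}(x_j):j\in\mathbb{N})$. For $\mathbf{u}\in c_0$, $\mathbb{N}(\mathbf{u}):=\{j:|u_j|=\|\mathbf{u}\|_\infty\}$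 and the truncation $\mathcal{S}(\mathbf{u})$ is the sequence equal to $u_j$ for $j\in\mathbb{N}(\mathbf{u})$ and $0$ otherwise. *)

theory Defs
  imports "HOL-Analysis.Analysis"
begin

text \<open>Real sequences are functions nat => real. The index set N_m is modelled by a
finite type 'm, so R^m is 'm => real.\<close>

definition in_l1 :: "(nat \<Rightarrow> real) \<Rightarrow> bool" where
  "in_l1 x \<longleftrightarrow> summable (\<lambda>j. \<bar>x j\<bar>)"

definition norm1 :: "(nat \<Rightarrow> real) \<Rightarrow> real" where
  "norm1 x = (\<Sum>j. \<bar>x j\<bar>)"

definition in_l2 :: "(nat \<Rightarrow> real) \<Rightarrow> bool" where
  "in_l2 x \<longleftrightarrow> summable (\<lambda>j. (x j)\<^sup>2)"

definition norm2_sq :: "(nat \<Rightarrow> real) \<Rightarrow> real" where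
  "norm2_sq x = (\<Sum>j. (x j)\<^sup>2)"

definition in_c0 :: "(nat \<Rightarrow> real) \<Rightarrow> bool" where
  "in_c0 u \<longleftrightarrow> u \<longlonglongrightarrow> 0"

definition sup_norm :: "(nat \<Rightarrow> real) \<Rightarrow> real" where
  "sup_norm u = (SUP j. \<bar>u j\<bar>)"

definition max_index_set :: "(nat \<Rightarrow> real) \<Rightarrow> nat set" where
  "max_index_set u = {j. \<bar>u j\<bar> = sup_norm u}"

definition trunc :: "(nat \<Rightarrow> real) \<Rightarrow> nat \<Rightarrow> real" where
  "trunc u j = (if j \<in> max_index_set u then u j else 0)"

definition pairing :: "(nat \<Rightarrow> real) \<Rightarrow> (nat \<Rightarrow> real) \<Rightarrow> real" where
  "pairing u x = (\<Sum>j. u j * x j)"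

definition lin_indep_seqs :: "('m::finite \<Rightarrow> nat \<Rightarrow> real) \<Rightarrow> bool" where
  "lin_indep_seqs u \<longleftrightarrow>
     (\<forall>c::'m \<Rightarrow> real. (\<forall>k. (\<Sum>i\<in>UNIV. c i * u i k) = 0) \<longrightarrow> (\<forall>i. c i = 0))"

definition Lop :: "('m::finite \<Rightarrow> nat \<Rightarrow> real) \<Rightarrow> (nat \<Rightarrow> real) \<Rightarrow> 'm \<Rightarrow> real" where
  "Lop u x = (\<lambda>i. pairing (u i) x)"

definition Ladj :: "('m::finite \<Rightarrow> nat \<Rightarrow> real) \<Rightarrow> ('m \<Rightarrow> real) \<Rightarrow> nat \<Rightarrow> real" where
  "Ladj u c = (\<lambda>k. \<Sum>i\<in>UNIV. c i * u i k)"

definition inner_m :: "('m::finite \<Rightarrow> real) \<Rightarrow> ('m \<Rightarrow> real) \<Rightarrow> real" where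
  "inner_m a b = (\<Sum>i\<in>UNIV. a i * b i)"

definition iota_conj :: "('m::finite \<Rightarrow> real) \<Rightarrow> ('m \<Rightarrow> real) \<Rightarrow> real" where
  "iota_conj y c = inner_m y c"

text \<open>Proximity operator of a real-valued convex function on R^m (the arg min, which is unique).\<close>
definition prox_m :: "(('m::finite \<Rightarrow> real) \<Rightarrow> real) \<Rightarrow> ('m \<Rightarrow> real) \<Rightarrow> 'm \<Rightarrow> real" where
  "prox_m \<psi> a = (THE c. \<forall>d. (1/2) * (\<Sum>i\<in>UNIV. (a i - c i)\<^sup>2) + \<psi> c
                             \<le> (1/2) * (\<Sum>i\<in>UNIV. (a i - d i)\<^sup>2) + \<psi> d)"

definition prox_l1 :: "(nat \<Rightarrow> real) \<Rightarrow> nat \<Rightarrow> real" where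
  "prox_l1 x = (THE z. in_l1 z \<and>
      (\<forall>w. in_l1 w \<longrightarrow> (1/2) * norm2_sq (\<lambda>j. x j - z j) + norm1 z
                         \<le> (1/2) * norm2_sq (\<lambda>j. x j - w j) + norm1 w))"

definition is_min_norm_sol :: "('m::finite \<Rightarrow> nat \<Rightarrow> real) \<Rightarrow> ('m \<Rightarrow> real) \<Rightarrow> (nat \<Rightarrow> real) \<Rightarrow> bool" where
  "is_min_norm_sol u y xh \<longleftrightarrow> in_l1 xh \<and> Lop u xh = y \<and>
     (\<forall>x. in_l1 x \<and> Lop u x = y \<longrightarrow> norm1 xh \<le> norm1 x)"

end

theory Submission
  imports Defs
begin


definition soft1 :: "real \<Rightarrow> real" where
  "soft1 t = (if t > 1 then t - 1 else if t < -1 then t + 1 else 0)"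

definition phi :: "real \<Rightarrow> real \<Rightarrow> real" where
  "phi t s = (1/2) * (t - s)\<^sup>2 + \<bar>s\<bar>"

lemma soft1_abs: "\<bar>soft1 t\<bar> \<le> \<bar>t\<bar>"
  by (simp add: soft1_def)

lemma phi_strong: "(1/2) * (s - soft1 t)\<^sup>2 \<le> phi t s - phi t (soft1 t)"
proof -
  have "(s - soft1 t)\<^sup>2 \<le> (t - s)\<^sup>2 + 2*\<bar>s\<bar> - (t - soft1 t)\<^sup>2 - 2*\<bar>soft1 t\<bar>"
  proof (cases "t > 1")
    case True
    then show ?thesis by (simp add: soft1_def power2_eq_square algebra_simps)
  next
    case False
    show ?thesis
    proof (cases "t < -1")
      case True
      then show ?thesis by (simp add: soft1_def power2_eq_square algebra_simps)
    next
      case False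
      with \<open>\<not> t > 1\<close> have "\<bar>t\<bar> \<le> 1" by simp
      then have "s * t \<le> \<bar>s\<bar>"
        by (metis abs_ge_self abs_ge_zero abs_mult mult_left_le order_trans)
      with False \<open>\<not> t > 1\<close> show ?thesis by (simp add: soft1_def power2_eq_square algebra_simps)
    qed
  qed
  then show ?thesis unfolding phi_def by simp
qed



lemma l1_bounded: "in_l1 x \<Longrightarrow> \<exists>M. \<forall>j. \<bar>x j\<bar> \<le> M"
proof -
  assume "in_l1 x"
  then have "(\<lambda>j. \<bar>x j\<bar>) \<longlonglongrightarrow> 0" unfolding in_l1_def by (rule summable_LIMSEQ_zero)
  then have "Bseq (\<lambda>j. \<bar>x j\<bar>)" by (rule convergent_imp_Bseq[OF convergentI])
  then obtain M where "\<forall>j. norm \<bar>x j\<bar> \<le> M" by (auto simp: Bseq_def)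
  then show ?thesis by auto
qed

lemma c0_bounded: "in_c0 x \<Longrightarrow> \<exists>M. \<forall>j. \<bar>x j\<bar> \<le> M"
proof -
  assume "in_c0 x"
  then have "Bseq x" unfolding in_c0_def by (rule convergent_imp_Bseq[OF convergentI])
  then obtain M where "\<forall>j. norm (x j) \<le> M" by (auto simp: Bseq_def)
  then show ?thesis by auto
qed

lemma l1_l2: "in_l1 x \<Longrightarrow> summable (\<lambda>j. (x j)\<^sup>2)"
proof -
  assume a: "in_l1 x"
  then obtain M where M: "\<forall>j. \<bar>x j\<bar> \<le> M" using l1_bounded by blast
  have g: "summable (\<lambda>j. M * \<bar>x j\<bar>)" using a unfolding in_l1_def by (rule summable_mult)
  have h: "norm ((x j)\<^sup>2) \<le> M * \<bar>x j\<bar>" for j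
  proof -
    have "\<bar>x j\<bar> * \<bar>x j\<bar> \<le> M * \<bar>x j\<bar>" using M by (intro mult_right_mono) auto
    then show ?thesis by (simp add: power2_eq_square abs_mult_self_eq)
  qed
  show ?thesis by (rule summable_comparison_test'[OF g h])
qed

lemma l1_comb: "in_l1 x \<Longrightarrow> in_l1 z \<Longrightarrow> in_l1 (\<lambda>j. a * x j + b * z j)"
proof -
  assume "in_l1 x" "in_l1 z"
  then have g: "summable (\<lambda>j. \<bar>a\<bar> * \<bar>x j\<bar> + \<bar>b\<bar> * \<bar>z j\<bar>)"
    unfolding in_l1_def by (intro summable_add summable_mult)
  have h: "norm \<bar>a * x j + b * z j\<bar> \<le> \<bar>a\<bar> * \<bar>x j\<bar> + \<bar>b\<bar> * \<bar>z j\<bar>" for j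
    by (simp add: abs_mult[symmetric] abs_triangle_ineq)
  show ?thesis unfolding in_l1_def by (rule summable_comparison_test'[OF g h])
qed

lemma l1_diff: "in_l1 x \<Longrightarrow> in_l1 z \<Longrightarrow> in_l1 (\<lambda>j. x j - z j)"
  using l1_comb[of x z 1 "-1"] by simp

lemma l1_fin: "finite S \<Longrightarrow> (\<And>j. j \<notin> S \<Longrightarrow> x j = 0) \<Longrightarrow> in_l1 x"
proof -
  assume "finite S" "\<And>j. j \<notin> S \<Longrightarrow> x j = 0"
  then have "(\<lambda>j. \<bar>x j\<bar>) sums (\<Sum>j\<in>S. \<bar>x j\<bar>)" by (intro sums_finite) auto
  then show ?thesis unfolding in_l1_def by (rule sums_summable)
qed

lemma norm1_nonneg: "in_l1 x \<Longrightarrow> 0 \<le> norm1 x"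
  unfolding norm1_def in_l1_def by (simp add: suminf_nonneg)


lemma prox_m_eq: "prox_m (iota_conj y) a = (\<lambda>i. a i - y i)"
proof -
  define f where "f c = (1/2) * (\<Sum>i\<in>UNIV. (a i - c i)\<^sup>2) + iota_conj y c" for c
  define c0 where "c0 = (\<lambda>i. a i - y i)"
  have pw: "(1/2)*(a i - d i)\<^sup>2 + y i * d i = ((1/2)*(a i - c0 i)\<^sup>2 + y i * c0 i) + (1/2)*(d i - c0 i)\<^sup>2" for d i
    unfolding c0_def power2_eq_square by (simp add: algebra_simps)
  have fs: "f d = (\<Sum>i\<in>UNIV. (1/2)*(a i - d i)\<^sup>2 + y i * d i)" for d
    unfolding f_def iota_conj_def inner_m_def by (simp add: sum_distrib_left sum.distrib)
  have key: "f d = f c0 + (1/2) * (\<Sum>i\<in>UNIV. (d i - c0 i)\<^sup>2)" for d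
  proof -
    have "f d = (\<Sum>i\<in>UNIV. ((1/2)*(a i - c0 i)\<^sup>2 + y i * c0 i) + (1/2)*(d i - c0 i)\<^sup>2)"
      unfolding fs[of d] pw[where d=d] ..
    also have "\<dots> = (\<Sum>i\<in>UNIV. (1/2)*(a i - c0 i)\<^sup>2 + y i * c0 i) + (\<Sum>i\<in>UNIV. (1/2)*(d i - c0 i)\<^sup>2)"
      by (rule sum.distrib)
    also have "\<dots> = f c0 + (1/2) * (\<Sum>i\<in>UNIV. (d i - c0 i)\<^sup>2)"
      by (simp only: fs[of c0] sum_distrib_left)
    finally show ?thesis .
  qed
  have "prox_m (iota_conj y) a = (THE c. \<forall>d. f c \<le> f d)" unfolding prox_m_def f_def ..
  also have "\<dots> = c0"
  proof (rule the_equality)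
    show "\<forall>d. f c0 \<le> f d"
    proof
      fix d
      have "0 \<le> (\<Sum>i\<in>UNIV. (d i - c0 i)\<^sup>2)" by (simp add: sum_nonneg)
      then show "f c0 \<le> f d" using key[of d] by linarith
    qed
    fix c assume "\<forall>d. f c \<le> f d"
    then have "f c \<le> f c0" by blast
    then have "(\<Sum>i\<in>UNIV. (c i - c0 i)\<^sup>2) \<le> 0" using key[of c] by linarith
    then have "\<forall>i\<in>UNIV. (c i - c0 i)\<^sup>2 = 0"
      using sum_nonneg_eq_0_iff[of UNIV "\<lambda>i. (c i - c0 i)\<^sup>2"] by (simp add: antisym sum_nonneg)
    then show "c = c0" by auto
  qed
  finally show ?thesis unfolding c0_def .
qed


lemma prox_l1_eq2: assumes x: "in_l1 x" shows "prox_l1 x = (\<lambda>j. soft1 (x j))"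
proof -
  define z0 where "z0 = (\<lambda>j. soft1 (x j))"
  have z0: "in_l1 z0"
  proof -
    have h: "norm \<bar>z0 j\<bar> \<le> \<bar>x j\<bar>" for j by (simp add: z0_def soft1_abs)
    show ?thesis using x unfolding in_l1_def by (rule summable_comparison_test'[OF _ h])
  qed
  have F: "(1/2) * norm2_sq (\<lambda>j. x j - z j) + norm1 z = (\<Sum>j. phi (x j) (z j))"
     and Fs: "summable (\<lambda>j. phi (x j) (z j))" if z: "in_l1 z" for z
  proof -
    have s1: "summable (\<lambda>j. (x j - z j)\<^sup>2)" using l1_l2[OF l1_diff[OF x z]] .
    have s2: "summable (\<lambda>j. \<bar>z j\<bar>)" using z unfolding in_l1_def .
    show "summable (\<lambda>j. phi (x j) (z j))" unfolding phi_def
      by (intro summable_add summable_mult s1 s2)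
    show "(1/2) * norm2_sq (\<lambda>j. x j - z j) + norm1 z = (\<Sum>j. phi (x j) (z j))"
      unfolding phi_def norm2_sq_def norm1_def
      using suminf_add[OF summable_mult[OF s1, of "1/2"] s2] suminf_mult[OF s1, of "1/2"] by simp
  qed
  have P0: "in_l1 z0 \<and> (\<forall>w. in_l1 w \<longrightarrow> (1/2) * norm2_sq (\<lambda>j. x j - z0 j) + norm1 z0
                         \<le> (1/2) * norm2_sq (\<lambda>j. x j - w j) + norm1 w)"
  proof (intro conjI allI impI z0)
    fix w assume w: "in_l1 w"
    have "(\<Sum>j. phi (x j) (z0 j)) \<le> (\<Sum>j. phi (x j) (w j))"
    proof (rule suminf_le[OF _ Fs[OF z0] Fs[OF w]])
      fix j
      have "0 \<le> (1/2) * (w j - soft1 (x j))\<^sup>2" by simp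
      then show "phi (x j) (z0 j) \<le> phi (x j) (w j)" using phi_strong[of "w j" "x j"]
        unfolding z0_def by linarith
    qed
    then show "(1/2) * norm2_sq (\<lambda>j. x j - z0 j) + norm1 z0
                         \<le> (1/2) * norm2_sq (\<lambda>j. x j - w j) + norm1 w"
      using F[OF z0] F[OF w] by simp
  qed
  have "prox_l1 x = z0"
    unfolding prox_l1_def
  proof (rule the_equality, rule P0)
    fix z assume Pz: "in_l1 z \<and> (\<forall>w. in_l1 w \<longrightarrow> (1/2) * norm2_sq (\<lambda>j. x j - z j) + norm1 z
                         \<le> (1/2) * norm2_sq (\<lambda>j. x j - w j) + norm1 w)"
    then have z: "in_l1 z" by blast
    have le: "(\<Sum>j. phi (x j) (z j)) \<le> (\<Sum>j. phi (x j) (z0 j))"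
      using Pz z0 F[OF z] F[OF z0] by metis
    define d where "d j = phi (x j) (z j) - phi (x j) (z0 j)" for j
    have dnn: "0 \<le> d j" for j
    proof -
      have "0 \<le> (1/2) * (z j - soft1 (x j))\<^sup>2" by simp
      then show ?thesis using phi_strong[of "z j" "x j"] unfolding d_def z0_def by linarith
    qed
    have ds: "summable d" unfolding d_def using Fs[OF z] Fs[OF z0] by (rule summable_diff)
    have "suminf d = (\<Sum>j. phi (x j) (z j)) - (\<Sum>j. phi (x j) (z0 j))"
      unfolding d_def using suminf_diff[OF Fs[OF z] Fs[OF z0]] by simp
    with le have "suminf d \<le> 0" by simp
    moreover have "0 \<le> suminf d" using ds dnn by (simp add: suminf_nonneg)
    ultimately have "suminf d = 0" by simp
    then have d0: "\<forall>j. d j = 0" using suminf_eq_zero_iff[OF ds] dnn by blast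
    show "z = z0"
    proof
      fix j
      have "(1/2) * (z j - soft1 (x j))\<^sup>2 \<le> 0" using phi_strong[of "z j" "x j"] d0
        unfolding d_def z0_def by simp
      then show "z j = z0 j" unfolding z0_def by simp
    qed
  qed
  then show ?thesis unfolding z0_def .
qed



lemma l1_zero: "in_l1 (\<lambda>j. 0)"
  by (rule l1_fin[of "{}"]) auto

lemma pair_summable: "in_c0 u \<Longrightarrow> in_l1 x \<Longrightarrow> summable (\<lambda>j. u j * x j)"
proof -
  assume "in_c0 u" "in_l1 x"
  then obtain M where M: "\<forall>j. \<bar>u j\<bar> \<le> M" using c0_bounded by blast
  have g: "summable (\<lambda>j. M * \<bar>x j\<bar>)" using \<open>in_l1 x\<close> unfolding in_l1_def by (rule summable_mult)
  have h: "norm (u j * x j) \<le> M * \<bar>x j\<bar>" for j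
    using M by (simp add: abs_mult mult_right_mono)
  show ?thesis by (rule summable_comparison_test'[OF g h])
qed

lemma pair_lin: assumes "in_c0 u" "in_l1 x" "in_l1 z"
  shows "pairing u (\<lambda>j. a * x j + b * z j) = a * pairing u x + b * pairing u z"
proof -
  have s1: "summable (\<lambda>j. a * (u j * x j))" using pair_summable[OF assms(1,2)] by (rule summable_mult)
  have s2: "summable (\<lambda>j. b * (u j * z j))" using pair_summable[OF assms(1,3)] by (rule summable_mult)
  have "pairing u (\<lambda>j. a * x j + b * z j) = (\<Sum>j. a * (u j * x j) + b * (u j * z j))"
    unfolding pairing_def by (simp add: algebra_simps)
  also have "\<dots> = (\<Sum>j. a * (u j * x j)) + (\<Sum>j. b * (u j * z j))" using suminf_add[OF s1 s2] by simp
  also have "\<dots> = a * pairing u x + b * pairing u z"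
    unfolding pairing_def using suminf_mult[OF pair_summable[OF assms(1,2)], of a]
      suminf_mult[OF pair_summable[OF assms(1,3)], of b] by simp
  finally show ?thesis .
qed

lemma Ladj_c0: "\<forall>i. in_c0 (u i) \<Longrightarrow> in_c0 (Ladj u c)"
proof -
  assume a: "\<forall>i. in_c0 (u i)"
  have "(\<lambda>k. \<Sum>i\<in>UNIV. c i * u i k) \<longlonglongrightarrow> (\<Sum>i\<in>(UNIV::'a set). c i * 0)"
    using a unfolding in_c0_def by (intro tendsto_sum tendsto_mult tendsto_const) auto
  then show ?thesis unfolding in_c0_def Ladj_def by simp
qed

lemma pair_Ladj: assumes "\<forall>i. in_c0 (u i)" "in_l1 x"
  shows "pairing (Ladj u c) x = (\<Sum>i\<in>UNIV. c i * pairing (u i) x)"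
proof -
  have s: "summable (\<lambda>j. c i * (u i j * x j))" for i
    using pair_summable[of "u i" x] assms by (intro summable_mult) auto
  have "pairing (Ladj u c) x = (\<Sum>j. \<Sum>i\<in>UNIV. c i * (u i j * x j))"
    unfolding pairing_def Ladj_def by (simp add: sum_distrib_right mult.assoc)
  also have "\<dots> = (\<Sum>i\<in>UNIV. \<Sum>j. c i * (u i j * x j))" by (rule suminf_sum) (rule s)
  also have "\<dots> = (\<Sum>i\<in>UNIV. c i * pairing (u i) x)"
    unfolding pairing_def using pair_summable[of "u _" x] assms
    by (intro sum.cong refl) (simp add: suminf_mult)
  finally show ?thesis .
qed

lemma pair_pert: assumes "summable (\<lambda>j. w j * x j)"
  shows "pairing w (\<lambda>j. x j + (if j = k then t else 0)) = pairing w x + w k * t"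
proof -
  have e: "(\<lambda>j. w j * (x j + (if j = k then t else 0))) = (\<lambda>j. w j * x j + (if j = k then w k * t else 0))"
    by (auto simp: algebra_simps)
  have s: "(\<lambda>j. if j = k then w k * t else 0) sums (w k * t)"
    using sums_single[of k "\<lambda>_. w k * t"] by simp
  show ?thesis unfolding pairing_def e
    using suminf_add[OF assms sums_summable[OF s]] sums_unique[OF s] by simp
qed

lemma norm1_pert: assumes "in_l1 x"
  shows "norm1 (\<lambda>j. x j + (if j = k then t else 0)) = norm1 x + (\<bar>x k + t\<bar> - \<bar>x k\<bar>)"
    and "in_l1 (\<lambda>j. x j + (if j = k then t else 0))"
proof -
  have e: "(\<lambda>j. \<bar>x j + (if j = k then t else 0)\<bar>) = (\<lambda>j. \<bar>x j\<bar> + (if j = k then \<bar>x k + t\<bar> - \<bar>x k\<bar> else 0))"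
    by auto
  have s: "(\<lambda>j. if j = k then \<bar>x k + t\<bar> - \<bar>x k\<bar> else 0) sums (\<bar>x k + t\<bar> - \<bar>x k\<bar>)"
    using sums_single[of k "\<lambda>_. \<bar>x k + t\<bar> - \<bar>x k\<bar>"] by simp
  have xs: "summable (\<lambda>j. \<bar>x j\<bar>)" using assms unfolding in_l1_def .
  show "norm1 (\<lambda>j. x j + (if j = k then t else 0)) = norm1 x + (\<bar>x k + t\<bar> - \<bar>x k\<bar>)"
    unfolding norm1_def e
    using suminf_add[OF xs sums_summable[OF s]] sums_unique[OF s] by simp
  show "in_l1 (\<lambda>j. x j + (if j = k then t else 0))"
    unfolding in_l1_def e by (intro summable_add xs sums_summable[OF s])
qed

lemma norm1_convex: assumes "in_l1 x" "in_l1 z"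
  shows "norm1 (\<lambda>j. a * x j + b * z j) \<le> \<bar>a\<bar> * norm1 x + \<bar>b\<bar> * norm1 z"
proof -
  have xs: "summable (\<lambda>j. \<bar>x j\<bar>)" and zs: "summable (\<lambda>j. \<bar>z j\<bar>)" using assms unfolding in_l1_def by auto
  have "norm1 (\<lambda>j. a * x j + b * z j) \<le> (\<Sum>j. \<bar>a\<bar> * \<bar>x j\<bar> + \<bar>b\<bar> * \<bar>z j\<bar>)"
    unfolding norm1_def
  proof (rule suminf_le)
    show "summable (\<lambda>j. \<bar>a * x j + b * z j\<bar>)" using l1_comb[OF assms] unfolding in_l1_def .
    show "summable (\<lambda>j. \<bar>a\<bar> * \<bar>x j\<bar> + \<bar>b\<bar> * \<bar>z j\<bar>)" by (intro summable_add summable_mult xs zs)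
    fix j show "\<bar>a * x j + b * z j\<bar> \<le> \<bar>a\<bar> * \<bar>x j\<bar> + \<bar>b\<bar> * \<bar>z j\<bar>"
      by (simp add: abs_mult[symmetric] abs_triangle_ineq)
  qed
  also have "\<dots> = \<bar>a\<bar> * norm1 x + \<bar>b\<bar> * norm1 z"
    unfolding norm1_def using suminf_add[OF summable_mult[OF xs, of "\<bar>a\<bar>"] summable_mult[OF zs, of "\<bar>b\<bar>"]]
      suminf_mult[OF xs, of "\<bar>a\<bar>"] suminf_mult[OF zs, of "\<bar>b\<bar>"] by simp
  finally show ?thesis .
qed



lemma cert_exists:
  fixes u :: "'m::finite \<Rightarrow> nat \<Rightarrow> real"
  assumes u: "\<forall>i. in_c0 (u i)" and li: "lin_indep_seqs u"
    and sol: "is_min_norm_sol u y xh"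
  shows "\<exists>c. \<forall>x. in_l1 x \<longrightarrow> norm1 xh + pairing (Ladj u c) xh \<le> norm1 x + pairing (Ladj u c) x"
proof -
  have xh: "in_l1 xh" and Lxh: "Lop u xh = y"
    and mn: "\<And>x. in_l1 x \<Longrightarrow> Lop u x = y \<Longrightarrow> norm1 xh \<le> norm1 x"
    using sol unfolding is_min_norm_sol_def by auto
  define Lv :: "(nat \<Rightarrow> real) \<Rightarrow> real^'m" where "Lv x = (\<chi> i. pairing (u i) x)" for x
  define A :: "((real^'m) \<times> real) set" where "A = {(Lv x, t) | x t. in_l1 x \<and> norm1 x < t}"
  define B :: "((real^'m) \<times> real) set" where "B = {(Lv xh, norm1 xh)}"
  have Lvlin: "Lv (\<lambda>j. a * x j + b * z j) = a *\<^sub>R Lv x + b *\<^sub>R Lv z" if "in_l1 x" "in_l1 z" for a b x z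
    unfolding Lv_def using pair_lin[OF _ that] u by (simp add: vec_eq_iff)
  have convA: "convex A"
    unfolding convex_def
  proof (intro ballI allI impI)
    fix p q :: "(real^'m) \<times> real" and a b :: real
    assume p: "p \<in> A" and q: "q \<in> A" and ab: "0 \<le> a" "0 \<le> b" "a + b = 1"
    obtain x t where p': "p = (Lv x, t)" "in_l1 x" "norm1 x < t" using p unfolding A_def by blast
    obtain z s where q': "q = (Lv z, s)" "in_l1 z" "norm1 z < s" using q unfolding A_def by blast
    have "norm1 (\<lambda>j. a * x j + b * z j) \<le> a * norm1 x + b * norm1 z"
      using norm1_convex[OF p'(2) q'(2), of a b] ab by simp
    also have "\<dots> < a * t + b * s"
    proof (cases "a = 0")
      case True then show ?thesis using ab q'(3) by simp
    next
      case False then have "a > 0" using ab by simp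
      then have "a * norm1 x < a * t" using p'(3) by simp
      moreover have "b * norm1 z \<le> b * s" using q'(3) ab by (simp add: mult_left_mono)
      ultimately show ?thesis by linarith
    qed
    finally have "norm1 (\<lambda>j. a * x j + b * z j) < a * t + b * s" .
    moreover have "a *\<^sub>R p + b *\<^sub>R q = (Lv (\<lambda>j. a * x j + b * z j), a * t + b * s)"
      using p' q' Lvlin by simp
    moreover have "in_l1 (\<lambda>j. a * x j + b * z j)" using l1_comb p'(2) q'(2) by blast
    ultimately show "a *\<^sub>R p + b *\<^sub>R q \<in> A" unfolding A_def by blast
  qed
  have convB: "convex B" unfolding B_def by simp
  have Ane: "A \<noteq> {}" unfolding A_def using l1_zero by (auto intro!: exI[of _ "norm1 (\<lambda>j. 0) + 1"])
  have Bne: "B \<noteq> {}" unfolding B_def by simp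
  have disj: "A \<inter> B = {}"
  proof (rule ccontr)
    assume "A \<inter> B \<noteq> {}"
    then obtain x t where "in_l1 x" "norm1 x < t" "Lv x = Lv xh" "t = norm1 xh"
      unfolding A_def B_def by auto
    moreover have "Lop u x = y" using \<open>Lv x = Lv xh\<close> Lxh unfolding Lv_def Lop_def
      by (auto simp: vec_eq_iff fun_eq_iff)
    ultimately show False using mn by fastforce
  qed
  obtain a b where a0: "a \<noteq> 0" and aA: "\<forall>p\<in>A. inner a p \<le> b" and aB: "\<forall>p\<in>B. inner a p \<ge> b"
    using separating_hyperplane_sets[OF convA convB Ane Bne disj] by blast
  obtain g s where a: "a = (g, s)" by (cases a)
  define Q where "Q x = (\<Sum>i\<in>UNIV. g $ i * pairing (u i) x)" for x
  have innerQ: "inner a (Lv x, t) = Q x + s * t" for x t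
    unfolding a Q_def Lv_def by (simp add: inner_vec_def)
  have main: "Q x + s * t \<le> Q xh + s * norm1 xh" if "in_l1 x" "norm1 x < t" for x t
  proof -
    have "(Lv x, t) \<in> A" unfolding A_def using that by blast
    then have "Q x + s * t \<le> b" using aA innerQ by metis
    moreover have "b \<le> Q xh + s * norm1 xh" using aB innerQ unfolding B_def by force
    ultimately show ?thesis by linarith
  qed
  have Q0: "Q (\<lambda>j. 0) = 0" unfolding Q_def pairing_def by simp
  have n0: "norm1 (\<lambda>j. 0) = 0" unfolding norm1_def by simp
  define K where "K = Q xh + s * norm1 xh"
  have sle: "s \<le> 0"
  proof (rule ccontr)
    assume "\<not> s \<le> 0"
    then have sp: "s > 0" by simp
    define t where "t = (\<bar>K\<bar> + 1) / s"
    have "t > 0" using sp unfolding t_def by (simp add: add_pos_nonneg)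
    then have "Q (\<lambda>j. 0) + s * t \<le> K" using main[OF l1_zero] n0 unfolding K_def by simp
    moreover have "s * t = \<bar>K\<bar> + 1" using sp unfolding t_def by simp
    ultimately show False using Q0 by linarith
  qed
  have sne: "s \<noteq> 0"
  proof
    assume s0: "s = 0"
    have "(\<Sum>i\<in>UNIV. g $ i * u i k) = 0" for k
    proof (rule ccontr)
      define q where "q = (\<Sum>i\<in>UNIV. g $ i * u i k)"
      assume "q \<noteq> 0"
      define r where "r = (\<bar>K\<bar> + 1) / q"
      define x where "x = (\<lambda>j. 0 + (if j = k then r else (0::real)))"
      have xl: "in_l1 x" unfolding x_def using norm1_pert(2)[OF l1_zero] .
      have "Q x = (\<Sum>i\<in>UNIV. g $ i * (u i k * r))"
        unfolding Q_def x_def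
        using pair_pert[OF pair_summable[OF _ l1_zero], of "u _" k r] u
        by (simp add: pairing_def)
      also have "\<dots> = q * r" unfolding q_def by (simp add: sum_distrib_right mult.assoc)
      also have "\<dots> = \<bar>K\<bar> + 1" unfolding r_def using \<open>q \<noteq> 0\<close> by simp
      finally have "Q x = \<bar>K\<bar> + 1" .
      moreover have "Q x \<le> K" using main[OF xl, of "norm1 x + 1"] s0 unfolding K_def by simp
      ultimately show False by linarith
    qed
    then have "\<forall>i. g $ i = 0" using li unfolding lin_indep_seqs_def by blast
    then have "g = 0" by (simp add: vec_eq_iff)
    with s0 a a0 show False by (simp add: zero_prod_def)
  qed
  with sle have sn: "s < 0" by simp
  define c where "c i = g $ i / s" for i
  have PQ: "pairing (Ladj u c) x = Q x / s" if "in_l1 x" for x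
    unfolding pair_Ladj[OF u that] Q_def c_def by (simp add: sum_divide_distrib)
  show ?thesis
  proof (intro exI allI impI)
    fix x assume x: "in_l1 x"
    show "norm1 xh + pairing (Ladj u c) xh \<le> norm1 x + pairing (Ladj u c) x"
    proof (rule field_le_epsilon)
      fix e :: real assume e: "0 < e"
      have "Q x + s * (norm1 x + e) \<le> Q xh + s * norm1 xh" using main[OF x, of "norm1 x + e"] e by simp
      then have "(Q xh + s * norm1 xh) / s \<le> (Q x + s * (norm1 x + e)) / s"
        using sn by (simp add: divide_right_mono_neg)
      then have "Q xh / s + norm1 xh \<le> Q x / s + norm1 x + e"
        using sn by (simp add: add_divide_distrib)
      then show "norm1 xh + pairing (Ladj u c) xh \<le> norm1 x + pairing (Ladj u c) x + e"
        using PQ[OF x] PQ[OF xh] by simp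
    qed
  qed
qed



lemma sup_ge: "in_c0 w \<Longrightarrow> \<bar>w j\<bar> \<le> sup_norm w"
proof -
  assume "in_c0 w"
  then obtain M where "\<forall>j. \<bar>w j\<bar> \<le> M" using c0_bounded by blast
  then have "bdd_above (range (\<lambda>j. \<bar>w j\<bar>))" by (auto intro: bdd_aboveI2)
  then show ?thesis unfolding sup_norm_def by (rule cSUP_upper[OF UNIV_I])
qed

lemma sup_least1: "(\<And>j. \<bar>w j\<bar> \<le> 1) \<Longrightarrow> sup_norm w \<le> 1"
  unfolding sup_norm_def by (rule cSUP_least) auto

lemma trunc_nz: "trunc w j \<noteq> 0 \<Longrightarrow> \<bar>w j\<bar> = sup_norm w \<and> trunc w j = w j"
  unfolding trunc_def max_index_set_def by (auto split: if_splits)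

lemma trunc_abs: "\<bar>trunc w j\<bar> \<le> \<bar>w j\<bar>"
  unfolding trunc_def by auto

lemma trunc_l1: assumes w: "in_c0 w" shows "in_l1 (trunc w)"
proof (cases "sup_norm w > 0")
  case False
  then have "\<forall>j. w j = 0" using sup_ge[OF w] by (meson abs_le_zero_iff not_le order_trans)
  then have "trunc w = (\<lambda>j. 0)" unfolding trunc_def by auto
  then show ?thesis using l1_zero by simp
next
  case True
  have "\<forall>\<^sub>F j in sequentially. dist (w j) 0 < sup_norm w"
    using w True unfolding in_c0_def tendsto_iff by blast
  then obtain N where N: "\<And>j. j \<ge> N \<Longrightarrow> \<bar>w j\<bar> < sup_norm w"
    unfolding eventually_sequentially by auto
  show ?thesis
  proof (rule l1_fin[of "{..<N}"])
    fix j assume "j \<notin> {..<N}"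
    then have "\<bar>w j\<bar> < sup_norm w" using N by simp
    then show "trunc w j = 0" using trunc_nz by fastforce
  qed simp
qed

lemma soft_cond: "a = soft1 (a - v) \<longleftrightarrow> (a > 0 \<longrightarrow> v = -1) \<and> (a < 0 \<longrightarrow> v = 1) \<and> (a = 0 \<longrightarrow> \<bar>v\<bar> \<le> 1)"
  unfolding soft1_def by auto

lemma subgrad_pt:
  fixes a w :: real
  assumes h: "\<And>t. 0 \<le> \<bar>a + t\<bar> - \<bar>a\<bar> + w * t"
  shows "\<bar>w\<bar> \<le> 1 \<and> (a > 0 \<longrightarrow> w = -1) \<and> (a < 0 \<longrightarrow> w = 1)"
proof -
  have h1: "0 \<le> \<bar>a + 1\<bar> - \<bar>a\<bar> + w" using h[of 1] by simp
  have h2: "0 \<le> \<bar>a - 1\<bar> - \<bar>a\<bar> - w" using h[of "-1"] by simp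
  have w1: "\<bar>w\<bar> \<le> 1" using h1 h2 by linarith
  have h3: "0 \<le> - \<bar>a\<bar> - w * a" using h[of "-a"] by simp
  have "a > 0 \<longrightarrow> w = -1"
  proof
    assume "a > 0"
    then have "a * (-1 - w) \<ge> 0" using h3 by (simp add: algebra_simps)
    then have "-1 - w \<ge> 0" using \<open>a > 0\<close> by (simp add: zero_le_mult_iff)
    then show "w = -1" using w1 by linarith
  qed
  moreover have "a < 0 \<longrightarrow> w = 1"
  proof
    assume "a < 0"
    then have "a * (1 - w) \<ge> 0" using h3 by (simp add: algebra_simps)
    then have "1 - w \<le> 0" using \<open>a < 0\<close> by (simp add: zero_le_mult_iff)
    then show "w = 1" using w1 by linarith
  qed
  ultimately show ?thesis using w1 by blast
qed

theorem mainTheorem15: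
  fixes u :: "'m::finite \<Rightarrow> nat \<Rightarrow> real"
    and y :: "'m \<Rightarrow> real"
    and xh :: "nat \<Rightarrow> real"
  assumes "\<forall>i. in_c0 (u i)"
    and "lin_indep_seqs u"
    and "in_l1 xh"
  shows "is_min_norm_sol u y xh \<longleftrightarrow>
    (\<exists>c :: 'm \<Rightarrow> real.
        c = prox_m (iota_conj y) (\<lambda>i. c i + Lop u xh i) \<and>
        xh = prox_l1 (\<lambda>k. xh k - trunc (Ladj u c) k))"
proof -
  note u = assms(1) and li = assms(2) and xh = assms(3)
  have first: "c = prox_m (iota_conj y) (\<lambda>i. c i + Lop u xh i) \<longleftrightarrow> Lop u xh = y" for c :: "'m \<Rightarrow> real"
    unfolding prox_m_eq by (auto simp: fun_eq_iff)
  have second: "xh = prox_l1 (\<lambda>k. xh k - trunc (Ladj u c) k) \<longleftrightarrow>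
      (\<forall>k. (xh k > 0 \<longrightarrow> trunc (Ladj u c) k = -1) \<and> (xh k < 0 \<longrightarrow> trunc (Ladj u c) k = 1)
          \<and> (xh k = 0 \<longrightarrow> \<bar>trunc (Ladj u c) k\<bar> \<le> 1))" for c
  proof -
    have "in_l1 (\<lambda>k. xh k - trunc (Ladj u c) k)"
      using l1_diff[OF xh trunc_l1[OF Ladj_c0[OF u]]] .
    then show ?thesis using prox_l1_eq2 by (simp add: fun_eq_iff soft_cond)
  qed
  show ?thesis
  proof
    assume sol: "is_min_norm_sol u y xh"
    then have Lxh: "Lop u xh = y" unfolding is_min_norm_sol_def by auto
    obtain c where cc: "\<And>x. in_l1 x \<Longrightarrow> norm1 xh + pairing (Ladj u c) xh \<le> norm1 x + pairing (Ladj u c) x"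
      using cert_exists[OF u li sol] by blast
    define w where "w = Ladj u c"
    have wc0: "in_c0 w" unfolding w_def by (rule Ladj_c0[OF u])
    have ws: "summable (\<lambda>j. w j * xh j)" by (rule pair_summable[OF wc0 xh])
    have pk: "\<bar>w k\<bar> \<le> 1 \<and> (xh k > 0 \<longrightarrow> w k = -1) \<and> (xh k < 0 \<longrightarrow> w k = 1)" for k
    proof (rule subgrad_pt)
      fix t
      have "norm1 xh + pairing w xh \<le> norm1 (\<lambda>j. xh j + (if j = k then t else 0)) + pairing w (\<lambda>j. xh j + (if j = k then t else 0))"
        using cc[OF norm1_pert(2)[OF xh]] unfolding w_def .
      then show "0 \<le> \<bar>xh k + t\<bar> - \<bar>xh k\<bar> + w k * t"
        unfolding norm1_pert(1)[OF xh] pair_pert[OF ws] by simp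
    qed
    have sup1: "sup_norm w \<le> 1" using pk by (intro sup_least1) blast
    have "(\<forall>k. (xh k > 0 \<longrightarrow> trunc w k = -1) \<and> (xh k < 0 \<longrightarrow> trunc w k = 1)
          \<and> (xh k = 0 \<longrightarrow> \<bar>trunc w k\<bar> \<le> 1))"
    proof (intro allI conjI impI)
      fix k
      have tm: "trunc w k = w k" if "xh k \<noteq> 0"
      proof -
        have "\<bar>w k\<bar> = 1" using pk[of k] that by auto
        then have "\<bar>w k\<bar> = sup_norm w" using sup1 sup_ge[OF wc0, of k] by linarith
        then show ?thesis unfolding trunc_def max_index_set_def by simp
      qed
      show "xh k > 0 \<Longrightarrow> trunc w k = -1" using tm pk[of k] by auto
      show "xh k < 0 \<Longrightarrow> trunc w k = 1" using tm pk[of k] by auto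
      show "xh k = 0 \<Longrightarrow> \<bar>trunc w k\<bar> \<le> 1" using trunc_abs[of w k] pk[of k] by linarith
    qed
    then show "\<exists>c :: 'm \<Rightarrow> real.
        c = prox_m (iota_conj y) (\<lambda>i. c i + Lop u xh i) \<and>
        xh = prox_l1 (\<lambda>k. xh k - trunc (Ladj u c) k)"
      using first Lxh second unfolding w_def by blast
  next
    assume "\<exists>c :: 'm \<Rightarrow> real.
        c = prox_m (iota_conj y) (\<lambda>i. c i + Lop u xh i) \<and>
        xh = prox_l1 (\<lambda>k. xh k - trunc (Ladj u c) k)"
    then obtain c where Lxh: "Lop u xh = y" and
      cond: "\<And>k. (xh k > 0 \<longrightarrow> trunc (Ladj u c) k = -1) \<and> (xh k < 0 \<longrightarrow> trunc (Ladj u c) k = 1)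
          \<and> (xh k = 0 \<longrightarrow> \<bar>trunc (Ladj u c) k\<bar> \<le> 1)"
      using first second by blast
    define w where "w = Ladj u c"
    have wc0: "in_c0 w" unfolding w_def by (rule Ladj_c0[OF u])
    show "is_min_norm_sol u y xh"
      unfolding is_min_norm_sol_def
    proof (intro conjI allI impI xh Lxh)
      fix x assume xa: "in_l1 x \<and> Lop u x = y"
      then have x: "in_l1 x" and Lx: "Lop u x = y" by auto
      show "norm1 xh \<le> norm1 x"
      proof (cases "\<forall>k. xh k = 0")
        case True
        then have "norm1 xh = 0" unfolding norm1_def by simp
        then show ?thesis using norm1_nonneg[OF x] by simp
      next
        case False
        then obtain k0 where k0: "xh k0 \<noteq> 0" by blast
        have tnz: "trunc w k \<noteq> 0" if "xh k \<noteq> 0" for k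
          using cond[of k] that unfolding w_def by (cases "xh k > 0") auto
        have "\<bar>trunc w k0\<bar> = 1" using cond[of k0] k0 unfolding w_def by (cases "xh k0 > 0") auto
        then have s1: "sup_norm w = 1" using trunc_nz[OF tnz[OF k0]] by simp
        have wle: "\<bar>w k\<bar> \<le> 1" for k using sup_ge[OF wc0, of k] s1 by simp
        have wxh: "w k * xh k = - \<bar>xh k\<bar>" for k
        proof (cases "xh k = 0")
          case True then show ?thesis by simp
        next
          case False
          then have "trunc w k = w k" using trunc_nz[OF tnz] by blast
          moreover have "(xh k > 0 \<longrightarrow> trunc w k = -1) \<and> (xh k < 0 \<longrightarrow> trunc w k = 1)"
            using cond[of k] unfolding w_def by blast
          ultimately have "(xh k > 0 \<longrightarrow> w k = -1) \<and> (xh k < 0 \<longrightarrow> w k = 1)" by simp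
          then show ?thesis using False by (cases "xh k > 0") auto
        qed
        have "pairing w x = pairing w xh"
          unfolding w_def pair_Ladj[OF u x] pair_Ladj[OF u xh]
          using Lx Lxh by (simp add: Lop_def fun_eq_iff)
        moreover have "pairing w xh = - norm1 xh"
          unfolding pairing_def norm1_def wxh using xh unfolding in_l1_def
          by (simp add: suminf_minus)
        moreover have "- pairing w x \<le> norm1 x"
        proof -
          have "- pairing w x = (\<Sum>j. - (w j * x j))"
            unfolding pairing_def using pair_summable[OF wc0 x] by (simp add: suminf_minus)
          also have "\<dots> \<le> (\<Sum>j. \<bar>x j\<bar>)"
          proof (rule suminf_le)
            show "summable (\<lambda>j. - (w j * x j))" using pair_summable[OF wc0 x] by (rule summable_minus)
            show "summable (\<lambda>j. \<bar>x j\<bar>)" using x unfolding in_l1_def .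
            fix j
            have "\<bar>w j * x j\<bar> \<le> \<bar>x j\<bar>" using wle[of j] by (simp add: abs_mult mult_left_le_one_le)
            then show "- (w j * x j) \<le> \<bar>x j\<bar>" by linarith
          qed
          finally show ?thesis unfolding norm1_def .
        qed
        ultimately show ?thesis by linarith
      qed
    qed
  qed
qed

end
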